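(* Let $\gamma$ be a $\tau$-admissible Borel probability measure on $M$. If $p_n\to p$ in $\overline{X}^S_\tau$, then $\hat p_n\to\hat p$ $\gamma$-almost everywhere on $M$.
   Context: $G$ connected complex semisimple Lie group, $K$ maximal compact, $X=G/K$; $\tau:G\to\mathrm{SL}(V)$ irreducible with finite kernel, $\langle\cdot,\cdot\rangle$ a $K$-invariant Hermitian product; $M\subset\mathbb P(V)$ the unique closed $G$-orbit. $\overline{X}^S_\tau$ is the closure in $\mathbb P(\mathcal H(V))$ ($\mathcal H(V)$ self-adjoint endomorphisms) of $\{[\tau(g)\tau(g)^*]:g\in G\}$; each point is $[A]$ with $A\ge0$. For $p=[A]$, $\hat p:M\dashrightarrow M$, $\hat p([v])=[\sqrt A\,v]$ for $[v]\notin\mathbb P(\ker A)$. $\gamma$ is $\tau$-admissible if $\gamma(H\cap M)=0$ for every hyperplane $H\subset\mathbb P(V)$. *)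

theory Defs
  imports "HOL-Probability.Probability_Measure" "HOL-Algebra.Group"
begin

text \<open>V = complex^'n with the standard Hermitian product (playing the role of the
K-invariant product); endomorphisms are complex^'n^'n.\<close>

type_synonym 'n cmat = "complex^'n^'n"

definition cinner :: "complex^('n::finite) \<Rightarrow> complex^'n \<Rightarrow> complex" where
  "cinner x y = (\<Sum>i\<in>UNIV. cnj (x$i) * y$i)"

definition adjoint_c :: "('n::finite) cmat \<Rightarrow> 'n cmat" where
  "adjoint_c A = (\<chi> i j. cnj (A$j$i))"

definition psd :: "('n::finite) cmat \<Rightarrow> bool" where
  "psd A \<longleftrightarrow> adjoint_c A = A \<and>
     (\<forall>x. Im (cinner x (A *v x)) = 0 \<and> Re (cinner x (A *v x)) \<ge> 0)"

definition psd_sqrt :: "('n::finite) cmat \<Rightarrow> 'n cmat" where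
  "psd_sqrt A = (THE B. psd B \<and> B ** B = A)"

text \<open>Point [v] of P(V), represented (homeomorphically) by the orthogonal projection onto the line.\<close>
definition lineP :: "complex^('n::finite) \<Rightarrow> 'n cmat" where
  "lineP v = (1 / (\<Sum>i\<in>UNIV. (cmod (v$i))\<^sup>2)) *\<^sub>R (\<chi> i j. v$i * cnj (v$j))"

text \<open>Point [A] of P(H(V)) for nonzero A \<ge> 0, represented by A / tr A.\<close>
definition normP :: "('n::finite) cmat \<Rightarrow> 'n cmat" where
  "normP A = (1 / Re (trace A)) *\<^sub>R A"

definition satake :: "('g, 'b) monoid_scheme \<Rightarrow> ('g \<Rightarrow> ('n::finite) cmat) \<Rightarrow> 'n cmat set" where
  "satake G \<tau> = closure {normP (\<tau> g ** adjoint_c (\<tau> g)) | g. g \<in> carrier G}"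

text \<open>For p=[A], hat p [v] = [sqrt A v]; in the projection model
  [sqrt A v] = S P S / tr(S P S) with S = sqrt A, P = lineP v. It is defined iff tr(S P S) \<noteq> 0,
  i.e. iff v \<notin> ker A.\<close>
definition hat_dom :: "('n::finite) cmat \<Rightarrow> 'n cmat \<Rightarrow> bool" where
  "hat_dom A P \<longleftrightarrow> trace (psd_sqrt A ** P ** psd_sqrt A) \<noteq> 0"

definition hat :: "('n::finite) cmat \<Rightarrow> 'n cmat \<Rightarrow> 'n cmat" where
  "hat A P = normP (psd_sqrt A ** P ** psd_sqrt A)"

definition hyperplaneP :: "complex^('n::finite) \<Rightarrow> 'n cmat set" where
  "hyperplaneP w = {lineP v | v. v \<noteq> 0 \<and> cinner w v = 0}"

definition admissible :: "('n::finite) cmat measure \<Rightarrow> 'n cmat set \<Rightarrow> bool" where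
  "admissible \<gamma> M \<longleftrightarrow> (\<forall>w. w \<noteq> 0 \<longrightarrow> emeasure \<gamma> (hyperplaneP w \<inter> M) = 0)"

definition csubspace :: "(complex^('n::finite)) set \<Rightarrow> bool" where
  "csubspace S \<longleftrightarrow> 0 \<in> S \<and> (\<forall>x\<in>S. \<forall>y\<in>S. x + y \<in> S) \<and> (\<forall>c. \<forall>x\<in>S. (\<chi> i. c * x$i) \<in> S)"

definition irreducible_rep :: "('g, 'b) monoid_scheme \<Rightarrow> ('g \<Rightarrow> ('n::finite) cmat) \<Rightarrow> bool" where
  "irreducible_rep G \<tau> \<longleftrightarrow> (\<forall>S. csubspace S \<and> (\<forall>g\<in>carrier G. \<forall>x\<in>S. \<tau> g *v x \<in> S)
      \<longrightarrow> S = {0} \<or> S = UNIV)"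

definition orbitP :: "('g, 'b) monoid_scheme \<Rightarrow> ('g \<Rightarrow> ('n::finite) cmat) \<Rightarrow> complex^'n \<Rightarrow> 'n cmat set" where
  "orbitP G \<tau> v = {lineP (\<tau> g *v v) | g. g \<in> carrier G}"

end

theory Submission
  imports Defs
begin


lemma mmult_nth: "((A::'a::semiring_1^'n::finite^'m) ** B) $ i $ j = (\<Sum>k\<in>UNIV. A$i$k * B$k$j)"
  by (simp add: matrix_matrix_mult_def)

lemma mvec_nth: "((A::'a::semiring_1^'n::finite^'m) *v x) $ i = (\<Sum>k\<in>UNIV. A$i$k * x$k)"
  by (simp add: matrix_vector_mult_def)

lemma madd_rdistrib: "((A::'a::semiring_1^'n::finite^'m) + B) ** C = A ** C + B ** C"
  by (simp add: vec_eq_iff mmult_nth distrib_right sum.distrib)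
lemma madd_ldistrib: "(C::'a::semiring_1^'n::finite^'m) ** (A + B) = C ** A + C ** B"
  by (simp add: vec_eq_iff mmult_nth distrib_left sum.distrib)
lemma mdiff_rdistrib: "((A::'a::ring_1^'n::finite^'m) - B) ** C = A ** C - B ** C"
  by (simp add: vec_eq_iff mmult_nth left_diff_distrib sum_subtractf)
lemma mdiff_ldistrib: "(C::'a::ring_1^'n::finite^'m) ** (A - B) = C ** A - C ** B"
  by (simp add: vec_eq_iff mmult_nth right_diff_distrib sum_subtractf)

lemma cscale: "r *\<^sub>R (z::complex) = complex_of_real r * z"
  by (simp add: scaleR_conv_of_real)

lemma mscale_left: "((r *\<^sub>R A)::complex^'n::finite^'m) ** B = r *\<^sub>R (A ** B)"
  unfolding vec_eq_iff mmult_nth vector_scaleR_component cscale by (simp add: sum_distrib_left mult.assoc)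
lemma mscale_right: "(A::complex^'n::finite^'m) ** (r *\<^sub>R B) = r *\<^sub>R (A ** B)"
  unfolding vec_eq_iff mmult_nth vector_scaleR_component cscale by (simp add: sum_distrib_left algebra_simps)
lemma msum_left: "finite I \<Longrightarrow> (\<Sum>i\<in>I. f i :: 'a::semiring_1^'n::finite^'m) ** B = (\<Sum>i\<in>I. f i ** B)"
  by (induct I rule: finite_induct) (auto simp: madd_rdistrib)
lemma msum_right: "finite I \<Longrightarrow> (B :: 'a::semiring_1^'n::finite^'m) ** (\<Sum>i\<in>I. f i) = (\<Sum>i\<in>I. B ** f i)"
  by (induct I rule: finite_induct) (auto simp: madd_ldistrib)
lemma mvsum: "finite I \<Longrightarrow> (\<Sum>i\<in>I. f i :: 'a::semiring_1^'n::finite^'m) *v x = (\<Sum>i\<in>I. f i *v x)"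
  by (induct I rule: finite_induct) (auto simp: matrix_vector_mult_add_rdistrib)
lemma mvscale: "((r *\<^sub>R A)::complex^'n::finite^'m) *v x = r *\<^sub>R (A *v x)"
  unfolding vec_eq_iff mvec_nth vector_scaleR_component cscale by (simp add: sum_distrib_left mult.assoc)
lemma mvscale2: "(A::complex^'n::finite^'m) *v (r *\<^sub>R x) = r *\<^sub>R (A *v x)"
  unfolding vec_eq_iff mvec_nth vector_scaleR_component cscale by (simp add: sum_distrib_left algebra_simps)

definition herm :: "('n::finite) cmat \<Rightarrow> bool" where "herm A \<longleftrightarrow> adjoint_c A = A"

lemma adj_nth[simp]: "adjoint_c A $ i $ j = cnj (A $ j $ i)"
  by (simp add: adjoint_c_def)
lemma adj_adj[simp]: "adjoint_c (adjoint_c A) = A"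
  by (simp add: vec_eq_iff)
lemma adj_mult: "adjoint_c (A ** B) = adjoint_c B ** adjoint_c A"
  by (simp add: vec_eq_iff mmult_nth mult.commute)
lemma adj_add: "adjoint_c (A + B) = adjoint_c A + adjoint_c B"
  by (simp add: vec_eq_iff)
lemma adj_diff: "adjoint_c (A - B) = adjoint_c A - adjoint_c B"
  by (simp add: vec_eq_iff)
lemma adj_scale: "adjoint_c (r *\<^sub>R A) = r *\<^sub>R adjoint_c A"
  unfolding vec_eq_iff adj_nth vector_scaleR_component cscale by simp
lemma adj_one: "adjoint_c (mat 1) = mat 1"
  by (simp add: vec_eq_iff mat_def)
lemma adj_zero: "adjoint_c 0 = 0"
  by (simp add: vec_eq_iff)
lemma adj_sum: "finite I \<Longrightarrow> adjoint_c (\<Sum>i\<in>I. f i) = (\<Sum>i\<in>I. adjoint_c (f i))"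
  by (induct I rule: finite_induct) (auto simp: adj_add adj_zero)

lemma cinner_Re: "Re (cinner x y) = x \<bullet> y"
  by (simp add: cinner_def inner_vec_def inner_complex_def)

lemma cinner_adj: "cinner x (A *v y) = cinner (adjoint_c A *v x) y"
proof -
  have "cinner x (A *v y) = (\<Sum>i\<in>UNIV. \<Sum>j\<in>UNIV. cnj (x$i) * A$i$j * y$j)"
    by (simp add: cinner_def mvec_nth sum_distrib_left mult.assoc)
  also have "\<dots> = (\<Sum>j\<in>UNIV. \<Sum>i\<in>UNIV. cnj (x$i) * A$i$j * y$j)"
    by (rule sum.swap)
  also have "\<dots> = cinner (adjoint_c A *v x) y"
    unfolding cinner_def mvec_nth adj_nth cnj_sum sum_distrib_right
    by (intro sum.cong refl) (simp add: mult_ac)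
  finally show ?thesis .
qed

lemma cinner_cnj: "cinner y x = cnj (cinner x y)"
  by (simp add: cinner_def mult.commute)

lemma herm_inner: "herm A \<Longrightarrow> x \<bullet> (A *v y) = (A *v x) \<bullet> y"
proof -
  assume h: "herm A"
  have "x \<bullet> (A *v y) = Re (cinner x (A *v y))" by (simp only: cinner_Re)
  also have "\<dots> = Re (cinner (adjoint_c A *v x) y)" by (simp only: cinner_adj)
  also have "\<dots> = (A *v x) \<bullet> y" using h unfolding herm_def by (simp only: cinner_Re)
  finally show ?thesis .
qed

lemma herm_inner_sym: "herm A \<Longrightarrow> x \<bullet> (A *v y) = y \<bullet> (A *v x)"
proof -
  assume h: "herm A"
  have "x \<bullet> (A *v y) = (A *v x) \<bullet> y" by (rule herm_inner[OF h])
  also have "\<dots> = y \<bullet> (A *v x)" by (rule inner_commute)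
  finally show ?thesis .
qed

lemma herm_Im: "herm A \<Longrightarrow> Im (cinner x (A *v x)) = 0"
proof -
  assume h: "herm A"
  have "cinner x (A *v x) = cinner (adjoint_c A *v x) x" by (simp only: cinner_adj)
  also have "\<dots> = cinner (A *v x) x" using h unfolding herm_def by simp
  also have "\<dots> = cnj (cinner x (A *v x))" by (rule cinner_cnj)
  finally have "Im (cinner x (A *v x)) = Im (cnj (cinner x (A *v x)))" by simp
  thus ?thesis by simp
qed

lemma psd_iff: "psd A \<longleftrightarrow> herm A \<and> (\<forall>x. 0 \<le> x \<bullet> (A *v x))"
proof
  assume "psd A" thus "herm A \<and> (\<forall>x. 0 \<le> x \<bullet> (A *v x))" unfolding psd_def herm_def cinner_Re by simp
next
  assume a: "herm A \<and> (\<forall>x. 0 \<le> x \<bullet> (A *v x))"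
  thus "psd A" unfolding psd_def using herm_Im[of A] by (simp add: herm_def cinner_Re)
qed

lemma quad_expand:
  assumes "herm A"
  shows "(x + t *\<^sub>R y) \<bullet> (A *v (x + t *\<^sub>R y)) = x \<bullet> (A *v x) + 2 * t * (y \<bullet> (A *v x)) + t^2 * (y \<bullet> (A *v y))"
  using herm_inner_sym[OF assms, of x y]
  by (simp add: matrix_vector_right_distrib mvscale2 inner_add_left inner_add_right power2_eq_square algebra_simps)

lemma lin_quad: fixes a b c :: real assumes "\<forall>t. 0 \<le> c + a * t + b * t^2" and "c = 0" shows "a = 0"
proof (rule ccontr)
  assume a: "a \<noteq> 0"
  define s where "s = 1 / (\<bar>b\<bar> + 1)"
  have s: "s > 0" "\<bar>b\<bar> * s < 1" unfolding s_def by (auto simp: field_simps)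
  have "0 \<le> a * (- a * s) + b * (- a * s)^2" using assms(1)[rule_format, of "- a * s"] assms(2) by simp
  hence "0 \<le> a^2 * s * (b * s - 1)" by (simp add: power2_eq_square algebra_simps)
  moreover have pos2: "a^2 * s > 0" using a s by simp
  moreover have "b * s \<le> \<bar>b\<bar> * s" using s(1) by (simp add: mult_right_mono)
  hence neg: "b * s - 1 < 0" using s(2) by linarith
  have "a\<^sup>2 * s * (b * s - 1) < 0" by (rule mult_pos_neg[OF pos2 neg])
  thus False using \<open>0 \<le> a\<^sup>2 * s * (b * s - 1)\<close> by linarith
qed

lemma psd_zero: assumes "psd A" "x \<bullet> (A *v x) = 0" shows "A *v x = 0"
proof -
  have h: "herm A" and pos: "\<And>z. 0 \<le> z \<bullet> (A *v z)" using assms(1) psd_iff by auto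
  have "\<And>y. y \<bullet> (A *v x) = 0"
  proof -
    fix y
    have "\<forall>t. 0 \<le> 0 + (2 * (y \<bullet> (A *v x))) * t + (y \<bullet> (A *v y)) * t^2"
    proof
      fix t
      have "0 \<le> (x + t *\<^sub>R y) \<bullet> (A *v (x + t *\<^sub>R y))" by (rule pos)
      thus "0 \<le> 0 + (2 * (y \<bullet> (A *v x))) * t + (y \<bullet> (A *v y)) * t^2"
        unfolding quad_expand[OF h] assms(2) by (simp add: algebra_simps)
    qed
    from lin_quad[OF this] show "y \<bullet> (A *v x) = 0" by simp
  qed
  from this[of "A *v x"] show ?thesis by simp
qed

lemma herm_zero: assumes "herm A" "\<forall>x. x \<bullet> (A *v x) = 0" shows "A = 0"
proof -
  have p: "psd A" unfolding psd_iff using assms by simp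
  have "\<And>x. A *v x = 0" using psd_zero[OF p] assms(2) by blast
  thus ?thesis by (simp add: matrix_eq)
qed



lemma sphere_max:
  fixes D :: "('n::finite) cmat"
  shows "\<exists>x. norm x = 1 \<and> (\<forall>y. norm y = 1 \<longrightarrow> y \<bullet> (D *v y) \<le> x \<bullet> (D *v x))"
proof -
  have "\<exists>x\<in>sphere 0 1. \<forall>y\<in>sphere 0 1. y \<bullet> (D *v y) \<le> x \<bullet> (D *v x)"
  proof (rule continuous_attains_sup)
    show "compact (sphere (0::complex^'n) 1)" by (rule compact_sphere)
    have "axis undefined 1 \<in> sphere (0::complex^'n) 1" by (simp add: norm_axis_1)
    thus "sphere (0::complex^'n) 1 \<noteq> {}" by blast
    show "continuous_on (sphere 0 1) (\<lambda>y. y \<bullet> (D *v y))"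
      by (intro continuous_on_inner continuous_on_id matrix_vector_mult_linear_continuous_on)
  qed
  thus ?thesis by auto
qed

lemma max_all:
  fixes D :: "('n::finite) cmat"
  assumes "norm x = 1" "\<forall>y. norm y = 1 \<longrightarrow> y \<bullet> (D *v y) \<le> x \<bullet> (D *v x)"
  shows "z \<bullet> (D *v z) \<le> (x \<bullet> (D *v x)) * (z \<bullet> z)"
proof (cases "z = 0")
  case True thus ?thesis by simp
next
  case False
  define u where "u = (1 / norm z) *\<^sub>R z"
  have nu: "norm u = 1" using False by (simp add: u_def)
  have z: "z = norm z *\<^sub>R u" using False by (simp add: u_def)
  have "z \<bullet> (D *v z) = (norm z)^2 * (u \<bullet> (D *v u))"
    by (subst (1 2) z) (simp add: mvscale2 power2_eq_square)
  also have "\<dots> \<le> (norm z)^2 * (x \<bullet> (D *v x))"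
    using assms(2) nu by (simp add: mult_left_mono)
  also have "\<dots> = (x \<bullet> (D *v x)) * (z \<bullet> z)" by (simp add: power2_norm_eq_inner)
  finally show ?thesis .
qed

lemma max_eig:
  fixes D :: "('n::finite) cmat"
  assumes h: "herm D" and nx: "norm x = 1" and mx: "\<forall>y. norm y = 1 \<longrightarrow> y \<bullet> (D *v y) \<le> x \<bullet> (D *v x)"
  shows "D *v x = (x \<bullet> (D *v x)) *\<^sub>R x"
proof -
  define \<mu> where "\<mu> = x \<bullet> (D *v x)"
  have xx: "x \<bullet> x = 1" using nx by (simp add: power2_norm_eq_inner[symmetric])
  have key: "\<And>y. \<mu> * (x \<bullet> y) = y \<bullet> (D *v x)"
  proof -
    fix y
    have "\<forall>t. 0 \<le> 0 + (2 * \<mu> * (x \<bullet> y) - 2 * (y \<bullet> (D *v x))) * t + (\<mu> * (y \<bullet> y) - y \<bullet> (D *v y)) * t^2"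
    proof
      fix t
      have "(x + t *\<^sub>R y) \<bullet> (D *v (x + t *\<^sub>R y)) \<le> \<mu> * ((x + t *\<^sub>R y) \<bullet> (x + t *\<^sub>R y))"
        using max_all[OF nx mx] unfolding \<mu>_def .
      also have "(x + t *\<^sub>R y) \<bullet> (x + t *\<^sub>R y) = 1 + 2 * t * (x \<bullet> y) + t^2 * (y \<bullet> y)"
        using xx by (simp add: inner_add_left inner_add_right inner_commute power2_eq_square algebra_simps)
      finally show "0 \<le> 0 + (2 * \<mu> * (x \<bullet> y) - 2 * (y \<bullet> (D *v x))) * t + (\<mu> * (y \<bullet> y) - y \<bullet> (D *v y)) * t^2"
        unfolding quad_expand[OF h] \<mu>_def[symmetric] by (simp add: algebra_simps)
    qed
    from lin_quad[OF this] show "\<mu> * (x \<bullet> y) = y \<bullet> (D *v x)" by simp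
  qed
  have "\<And>y. y \<bullet> (D *v x - \<mu> *\<^sub>R x) = 0"
    using key by (simp add: inner_diff_right inner_commute)
  hence "D *v x - \<mu> *\<^sub>R x = 0" by (metis inner_eq_zero_iff)
  thus ?thesis unfolding \<mu>_def by simp
qed

lemma sqrt_unique_half:
  fixes B C :: "('n::finite) cmat"
  assumes pB: "psd B" and pC: "psd C" and sq: "B ** B = C ** C"
  shows "y \<bullet> ((B - C) *v y) \<le> 0"
proof -
  define D where "D = B - C"
  have hB: "herm B" and hC: "herm C" using pB pC psd_iff by auto
  have hD: "herm D" using hB hC unfolding herm_def D_def by (simp add: adj_diff)
  obtain x where nx: "norm x = 1" and mx: "\<forall>y. norm y = 1 \<longrightarrow> y \<bullet> (D *v y) \<le> x \<bullet> (D *v x)"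
    using sphere_max by blast
  define lam where "lam = x \<bullet> (D *v x)"
  have ev: "D *v x = lam *\<^sub>R x" using max_eig[OF hD nx mx] unfolding lam_def .
  have z: "B ** D + D ** C = 0"
    unfolding D_def by (simp add: mdiff_ldistrib mdiff_rdistrib sq)
  have "0 = x \<bullet> ((B ** D + D ** C) *v x)" by (simp add: z)
  also have "\<dots> = x \<bullet> (B *v (D *v x)) + x \<bullet> (D *v (C *v x))"
    by (simp add: matrix_vector_mult_add_rdistrib matrix_vector_mul_assoc inner_add_right)
  also have "x \<bullet> (D *v (C *v x)) = (D *v x) \<bullet> (C *v x)" by (rule herm_inner[OF hD])
  finally have eq: "0 = lam * (x \<bullet> (B *v x)) + lam * (x \<bullet> (C *v x))"
    unfolding ev by (simp add: mvscale2)
  have l: "lam \<le> 0"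
  proof (rule ccontr)
    assume "\<not> lam \<le> 0"
    hence lp: "lam > 0" by simp
    have b0: "0 \<le> x \<bullet> (B *v x)" and c0: "0 \<le> x \<bullet> (C *v x)" using pB pC psd_iff by auto
    have "x \<bullet> (B *v x) + x \<bullet> (C *v x) = 0" using eq lp
      by (metis distrib_left mult_eq_0_iff order_less_irrefl)
    hence "x \<bullet> (B *v x) = 0" "x \<bullet> (C *v x) = 0" using b0 c0 by linarith+
    hence "B *v x = 0" "C *v x = 0" using psd_zero pB pC by blast+
    hence "D *v x = 0" unfolding D_def by (simp add: matrix_vector_mult_diff_rdistrib)
    hence "lam *\<^sub>R x = 0" using ev by simp
    moreover have "x \<noteq> 0" using nx by auto
    ultimately show False using lp by simp
  qed
  have "y \<bullet> (D *v y) \<le> lam * (y \<bullet> y)" using max_all[OF nx mx] unfolding lam_def .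
  also have "\<dots> \<le> 0" using l by (simp add: mult_nonpos_nonneg)
  finally show ?thesis unfolding D_def .
qed

lemma sqrt_unique:
  fixes B C :: "('n::finite) cmat"
  assumes pB: "psd B" and pC: "psd C" and sq: "B ** B = C ** C"
  shows "B = C"
proof -
  have hB: "herm B" and hC: "herm C" using pB pC psd_iff by auto
  have hD: "herm (B - C)" using hB hC unfolding herm_def by (simp add: adj_diff)
  have "\<forall>y. y \<bullet> ((B - C) *v y) = 0"
  proof
    fix y
    have a: "y \<bullet> ((B - C) *v y) \<le> 0" by (rule sqrt_unique_half[OF pB pC sq])
    have "y \<bullet> ((C - B) *v y) \<le> 0" by (rule sqrt_unique_half[OF pC pB sq[symmetric]])
    hence "0 \<le> y \<bullet> ((B - C) *v y)" by (simp add: matrix_vector_mult_diff_rdistrib inner_diff_right)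
    with a show "y \<bullet> ((B - C) *v y) = 0" by linarith
  qed
  from herm_zero[OF hD this] show ?thesis by simp
qed



primrec mpow :: "('n::finite) cmat \<Rightarrow> nat \<Rightarrow> 'n cmat" where
  "mpow B 0 = mat 1"
| "mpow B (Suc k) = B ** mpow B k"

lemma mpow_add: "mpow B (i + j) = mpow B i ** mpow B j"
  by (induct i) (simp_all add: matrix_mul_assoc)

lemma mpow_one: "mpow B 1 = B"
  by simp

lemma herm_mpow: "herm B \<Longrightarrow> herm (mpow B k)"
proof (induct k)
  case 0 thus ?case by (simp add: herm_def adj_one)
next
  case (Suc k)
  have "mpow B k ** B = mpow B (k + 1)" by (simp only: mpow_add mpow_one)
  also have "\<dots> = B ** mpow B k" by simp
  finally have c: "mpow B k ** B = B ** mpow B k" .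
  show ?case using Suc c unfolding herm_def by (simp add: adj_mult)
qed

lemma mpow_q_nonneg:
  assumes pB: "psd B"
  shows "0 \<le> x \<bullet> (mpow B k *v x)"
proof -
  have hB: "herm B" using pB psd_iff by auto
  have "\<exists>m. k = m + m \<or> k = m + Suc m" by presburger
  then obtain m where "k = m + m \<or> k = m + Suc m" by blast
  thus ?thesis
  proof
    assume k: "k = m + m"
    have "x \<bullet> (mpow B k *v x) = x \<bullet> (mpow B m *v (mpow B m *v x))"
      by (simp add: k mpow_add matrix_vector_mul_assoc)
    also have "\<dots> = (mpow B m *v x) \<bullet> (mpow B m *v x)" by (rule herm_inner[OF herm_mpow[OF hB]])
    finally show ?thesis by simp
  next
    assume k: "k = m + Suc m"
    have "x \<bullet> (mpow B k *v x) = x \<bullet> (mpow B m *v (B *v (mpow B m *v x)))"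
      by (simp only: k mpow_add mpow.simps(2) matrix_vector_mul_assoc)
    also have "\<dots> = (mpow B m *v x) \<bullet> (B *v (mpow B m *v x))" by (rule herm_inner[OF herm_mpow[OF hB]])
    finally show ?thesis using pB[unfolded psd_iff] by simp
  qed
qed

lemma mpow_norm:
  assumes "\<forall>x. norm (B *v x) \<le> norm x"
  shows "norm (mpow B k *v x) \<le> norm x"
proof (induct k)
  case 0 thus ?case by simp
next
  case (Suc k)
  have "norm (mpow B (Suc k) *v x) = norm (B *v (mpow B k *v x))" by (simp add: matrix_vector_mul_assoc)
  also have "\<dots> \<le> norm (mpow B k *v x)" using assms by blast
  finally show ?case using Suc by linarith
qed

lemma mpow_q_le:
  assumes "\<forall>x. norm (B *v x) \<le> norm x"
  shows "x \<bullet> (mpow B k *v x) \<le> x \<bullet> x"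
proof -
  have "x \<bullet> (mpow B k *v x) \<le> norm x * norm (mpow B k *v x)" by (rule norm_cauchy_schwarz)
  also have "\<dots> \<le> norm x * norm x" using mpow_norm[OF assms] by (simp add: mult_left_mono)
  finally show ?thesis by (simp add: power2_norm_eq_inner[symmetric] power2_eq_square)
qed

definition mcone :: "('n::finite) cmat \<Rightarrow> real \<Rightarrow> 'n cmat set" where
  "mcone B s = {P. \<exists>w N. (\<forall>k. 0 \<le> w k) \<and> s = (\<Sum>k<N. w k) \<and> P = (\<Sum>k<N. w k *\<^sub>R mpow B k)}"

lemma sum_pad:
  fixes f :: "nat \<Rightarrow> 'a::comm_monoid_add"
  assumes "N1 \<le> N" shows "(\<Sum>k<N. if k < N1 then f k else 0) = (\<Sum>k<N1. f k)"
proof -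
  have "(\<Sum>k<N. if k < N1 then f k else 0) = (\<Sum>k\<in>{..<N} \<inter> {k. k < N1}. f k)"
    by (simp add: sum.inter_restrict)
  also have "{..<N} \<inter> {k. k < N1} = {..<N1}" using assms by auto
  finally show ?thesis .
qed

lemma cone_nonneg: "P \<in> mcone B s \<Longrightarrow> 0 \<le> s"
  unfolding mcone_def by (auto intro: sum_nonneg)

lemma cone_zero: "0 \<in> mcone B 0"
  unfolding mcone_def by (rule CollectI, rule exI[of _ "\<lambda>k. 0"], rule exI[of _ 0]) simp

lemma cone_pow: "mpow B j \<in> mcone B 1"
  unfolding mcone_def
proof (rule CollectI, rule exI[of _ "\<lambda>k. if k = j then 1 else 0"], rule exI[of _ "Suc j"], intro conjI)
  show "\<forall>k. 0 \<le> (if k = j then 1 else (0::real))" by simp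
  show "1 = (\<Sum>k<Suc j. if k = j then 1 else (0::real))" by simp
  have "(\<Sum>k<Suc j. (if k = j then 1 else 0) *\<^sub>R mpow B k) = (\<Sum>k<Suc j. if k = j then mpow B k else 0)"
    by (intro sum.cong) auto
  also have "\<dots> = mpow B j" by simp
  finally show "mpow B j = (\<Sum>k<Suc j. (if k = j then 1 else 0) *\<^sub>R mpow B k)" by simp
qed

lemma cone_B: "B \<in> mcone B 1"
  using cone_pow[of B 1] by simp

lemma cone_add:
  assumes "P \<in> mcone B s" "Q \<in> mcone B t" shows "P + Q \<in> mcone B (s + t)"
proof -
  obtain w1 N1 where 1: "\<forall>k. 0 \<le> w1 k" "s = (\<Sum>k<N1. w1 k)" "P = (\<Sum>k<N1. w1 k *\<^sub>R mpow B k)"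
    using assms(1) unfolding mcone_def by blast
  obtain w2 N2 where 2: "\<forall>k. 0 \<le> w2 k" "t = (\<Sum>k<N2. w2 k)" "Q = (\<Sum>k<N2. w2 k *\<^sub>R mpow B k)"
    using assms(2) unfolding mcone_def by blast
  define N where "N = N1 + N2"
  define w where "w k = (if k < N1 then w1 k else 0) + (if k < N2 then w2 k else 0)" for k
  have le: "N1 \<le> N" "N2 \<le> N" unfolding N_def by auto
  have "(\<Sum>k<N. w k) = (\<Sum>k<N. (if k < N1 then w1 k else 0) + (if k < N2 then w2 k else 0))"
    unfolding w_def by (rule refl)
  also have "\<dots> = (\<Sum>k<N. if k < N1 then w1 k else 0) + (\<Sum>k<N. if k < N2 then w2 k else 0)"
    by (rule sum.distrib)
  also have "\<dots> = s + t" by (simp only: sum_pad[OF le(1)] sum_pad[OF le(2)] 1(2) 2(2))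
  finally have s: "s + t = (\<Sum>k<N. w k)" ..
  have "(\<Sum>k<N. w k *\<^sub>R mpow B k) = (\<Sum>k<N. (if k < N1 then w1 k *\<^sub>R mpow B k else 0) + (if k < N2 then w2 k *\<^sub>R mpow B k else 0))"
    by (rule sum.cong) (auto simp: w_def scaleR_add_left)
  also have "\<dots> = (\<Sum>k<N. if k < N1 then w1 k *\<^sub>R mpow B k else 0) + (\<Sum>k<N. if k < N2 then w2 k *\<^sub>R mpow B k else 0)"
    by (rule sum.distrib)
  also have "\<dots> = P + Q" by (simp only: sum_pad[OF le(1)] sum_pad[OF le(2)] 1(3) 2(3))
  finally have p: "P + Q = (\<Sum>k<N. w k *\<^sub>R mpow B k)" ..
  have wp: "\<forall>k. 0 \<le> w k" unfolding w_def using 1(1) 2(1) by simp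
  show ?thesis unfolding mcone_def
    by (rule CollectI, rule exI[of _ w], rule exI[of _ N]) (intro conjI wp s p)
qed

lemma cone_scale:
  assumes "P \<in> mcone B s" "0 \<le> r" shows "r *\<^sub>R P \<in> mcone B (r * s)"
proof -
  obtain w N where 1: "\<forall>k. 0 \<le> w k" "s = (\<Sum>k<N. w k)" "P = (\<Sum>k<N. w k *\<^sub>R mpow B k)"
    using assms(1) unfolding mcone_def by blast
  have a: "\<forall>k. 0 \<le> r * w k" using 1(1) assms(2) by simp
  have b: "r * s = (\<Sum>k<N. r * w k)" unfolding 1(2) by (rule sum_distrib_left)
  have c: "r *\<^sub>R P = (\<Sum>k<N. (r * w k) *\<^sub>R mpow B k)" unfolding 1(3) by (simp only: scaleR_sum_right scaleR_scaleR)
  show ?thesis unfolding mcone_def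
    by (rule CollectI, rule exI[of _ "\<lambda>k. r * w k"], rule exI[of _ N]) (intro conjI a b c)
qed

lemma cone_sum:
  assumes "finite I" "\<forall>i\<in>I. P i \<in> mcone B (s i)"
  shows "(\<Sum>i\<in>I. P i) \<in> mcone B (\<Sum>i\<in>I. s i)"
  using assms by (induct I rule: finite_induct) (auto intro: cone_zero cone_add)

lemma msum_mult:
  fixes X Y :: "nat \<Rightarrow> ('n::finite) cmat"
  shows "(\<Sum>i<N1. a i *\<^sub>R X i) ** (\<Sum>j<N2. b j *\<^sub>R Y j) = (\<Sum>i<N1. \<Sum>j<N2. (a i * b j) *\<^sub>R (X i ** Y j))"
proof -
  have "(\<Sum>i<N1. a i *\<^sub>R X i) ** (\<Sum>j<N2. b j *\<^sub>R Y j) = (\<Sum>i<N1. (a i *\<^sub>R X i) ** (\<Sum>j<N2. b j *\<^sub>R Y j))"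
    by (rule msum_left) simp
  also have "\<dots> = (\<Sum>i<N1. a i *\<^sub>R (X i ** (\<Sum>j<N2. b j *\<^sub>R Y j)))"
    by (simp only: mscale_left)
  also have "\<dots> = (\<Sum>i<N1. a i *\<^sub>R (\<Sum>j<N2. X i ** (b j *\<^sub>R Y j)))"
    by (simp only: msum_right[OF finite_lessThan])
  also have "\<dots> = (\<Sum>i<N1. \<Sum>j<N2. (a i * b j) *\<^sub>R (X i ** Y j))"
    by (simp only: mscale_right scaleR_sum_right scaleR_scaleR)
  finally show ?thesis .
qed

lemma cone_expand:
  assumes "P \<in> mcone B s" "Q \<in> mcone B t"
  shows "\<exists>w1 N1 w2 N2. (\<forall>k. 0 \<le> w1 k) \<and> (\<forall>k. 0 \<le> w2 k) \<and> s = (\<Sum>k<N1. w1 k) \<and> t = (\<Sum>k<N2. w2 k) \<and>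
     P ** Q = (\<Sum>i<N1. \<Sum>j<N2. (w1 i * w2 j) *\<^sub>R mpow B (i + j)) \<and>
     Q ** P = (\<Sum>j<N2. \<Sum>i<N1. (w2 j * w1 i) *\<^sub>R mpow B (j + i))"
proof -
  obtain w1 N1 where 1: "\<forall>k. 0 \<le> w1 k" "s = (\<Sum>k<N1. w1 k)" "P = (\<Sum>k<N1. w1 k *\<^sub>R mpow B k)"
    using assms(1) unfolding mcone_def by blast
  obtain w2 N2 where 2: "\<forall>k. 0 \<le> w2 k" "t = (\<Sum>k<N2. w2 k)" "Q = (\<Sum>k<N2. w2 k *\<^sub>R mpow B k)"
    using assms(2) unfolding mcone_def by blast
  have a: "P ** Q = (\<Sum>i<N1. \<Sum>j<N2. (w1 i * w2 j) *\<^sub>R mpow B (i + j))"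
    unfolding 1(3) 2(3) msum_mult by (simp only: mpow_add)
  have b: "Q ** P = (\<Sum>j<N2. \<Sum>i<N1. (w2 j * w1 i) *\<^sub>R mpow B (j + i))"
    unfolding 1(3) 2(3) msum_mult by (simp only: mpow_add)
  show ?thesis by (rule exI[of _ w1], rule exI[of _ N1], rule exI[of _ w2], rule exI[of _ N2]) (intro conjI 1(1) 2(1) 1(2) 2(2) a b)
qed

lemma cone_mult:
  assumes "P \<in> mcone B s" "Q \<in> mcone B t" shows "P ** Q \<in> mcone B (s * t)"
proof -
  obtain w1 N1 w2 N2 where e: "\<forall>k. 0 \<le> w1 k" "\<forall>k. 0 \<le> w2 k" "s = (\<Sum>k<N1. w1 k)" "t = (\<Sum>k<N2. w2 k)"
     "P ** Q = (\<Sum>i<N1. \<Sum>j<N2. (w1 i * w2 j) *\<^sub>R mpow B (i + j))"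
    using cone_expand[OF assms] by blast
  have "(\<Sum>i<N1. \<Sum>j<N2. (w1 i * w2 j) *\<^sub>R mpow B (i + j)) \<in> mcone B (\<Sum>i<N1. \<Sum>j<N2. w1 i * w2 j * 1)"
    using e(1,2) by (intro cone_sum ballI cone_scale cone_pow finite_lessThan) simp
  thus ?thesis using e by (simp add: sum_product)
qed

lemma cone_comm:
  assumes "P \<in> mcone B s" "Q \<in> mcone B t" shows "P ** Q = Q ** P"
proof -
  obtain w1 N1 w2 N2 where e:
     "P ** Q = (\<Sum>i<N1. \<Sum>j<N2. (w1 i * w2 j) *\<^sub>R mpow B (i + j))"
     "Q ** P = (\<Sum>j<N2. \<Sum>i<N1. (w2 j * w1 i) *\<^sub>R mpow B (j + i))"
    using cone_expand[OF assms] by blast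
  show ?thesis unfolding e by (subst sum.swap) (simp add: add.commute mult.commute)
qed

lemma cone_props:
  assumes pB: "psd B" and cB: "\<forall>x. norm (B *v x) \<le> norm x" and P: "P \<in> mcone B s"
  shows "herm P" "0 \<le> x \<bullet> (P *v x)" "x \<bullet> (P *v x) \<le> s * (x \<bullet> x)"
proof -
  have hB: "herm B" using pB psd_iff by auto
  obtain w N where 1: "\<forall>k. 0 \<le> w k" "s = (\<Sum>k<N. w k)" "P = (\<Sum>k<N. w k *\<^sub>R mpow B k)"
    using P unfolding mcone_def by blast
  show "herm P" unfolding 1(3) herm_def
    using herm_mpow[OF hB] by (simp add: adj_sum adj_scale herm_def)
  have q: "x \<bullet> (P *v x) = (\<Sum>k<N. w k * (x \<bullet> (mpow B k *v x)))"
    unfolding 1(3) by (simp add: mvsum mvscale inner_sum_right)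
  show "0 \<le> x \<bullet> (P *v x)" unfolding q using 1(1) mpow_q_nonneg[OF pB]
    by (intro sum_nonneg) simp
  have "x \<bullet> (P *v x) \<le> (\<Sum>k<N. w k * (x \<bullet> x))" unfolding q
    using 1(1) mpow_q_le[OF cB] by (intro sum_mono mult_left_mono) auto
  thus "x \<bullet> (P *v x) \<le> s * (x \<bullet> x)" using 1(2) by (simp add: sum_distrib_right)
qed



lemma tendsto_mv: "(X \<longlongrightarrow> L) F \<Longrightarrow> ((\<lambda>k. (X k :: ('n::finite) cmat) *v y) \<longlongrightarrow> L *v y) F"
  unfolding mvec_nth[abs_def]
  by (intro vec_tendstoI) (simp add: mvec_nth, intro tendsto_sum tendsto_mult tendsto_const tendsto_vec_nth)

lemma tendsto_mm: "(X \<longlongrightarrow> A) F \<Longrightarrow> (Y \<longlongrightarrow> B) F \<Longrightarrow> ((\<lambda>k. (X k :: ('n::finite) cmat) ** Y k) \<longlongrightarrow> A ** B) F"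
  by (intro vec_tendstoI) (simp add: mmult_nth, intro tendsto_sum tendsto_mult tendsto_vec_nth)

lemma tendsto_adj: "(X \<longlongrightarrow> A) F \<Longrightarrow> ((\<lambda>k. adjoint_c (X k :: ('n::finite) cmat)) \<longlongrightarrow> adjoint_c A) F"
  by (intro vec_tendstoI) (simp, intro tendsto_cnj tendsto_vec_nth)

lemma tendsto_trace: "(X \<longlongrightarrow> A) F \<Longrightarrow> ((\<lambda>k. trace (X k :: ('n::finite) cmat)) \<longlongrightarrow> trace A) F"
  unfolding trace_def by (intro tendsto_sum tendsto_vec_nth)

lemma tendsto_quad: "(X \<longlongrightarrow> L) F \<Longrightarrow> ((\<lambda>k. x \<bullet> ((X k :: ('n::finite) cmat) *v y)) \<longlongrightarrow> x \<bullet> (L *v y)) F"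
  by (intro tendsto_inner tendsto_const tendsto_mv)

lemma polar:
  assumes "herm H"
  shows "a \<bullet> (H *v b) = ((a + b) \<bullet> (H *v (a + b)) - (a - b) \<bullet> (H *v (a - b))) / 4"
proof -
  have s: "b \<bullet> (H *v a) = a \<bullet> (H *v b)" using herm_inner_sym[OF assms] by simp
  show ?thesis
    by (simp add: matrix_vector_right_distrib matrix_vector_mult_diff_distrib inner_add_left inner_add_right
        inner_diff_left inner_diff_right s)
qed

lemma inner_axis_left: "axis i c \<bullet> (v::complex^('n::finite)) = c \<bullet> v $ i"
proof -
  have "\<And>m. axis i c $ m \<bullet> v $ m = (if m = i then c \<bullet> v $ i else 0)" by (simp add: axis_def)
  thus ?thesis unfolding inner_vec_def by simp
qed

lemma mv_axis: "((H::('n::finite) cmat) *v axis j 1) $ i = H $ i $ j"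
proof -
  have "\<And>m. H $ i $ m * axis j 1 $ m = (if m = j then H $ i $ j else 0)" by (simp add: axis_def)
  thus ?thesis unfolding mvec_nth by simp
qed

lemma entry_re: "Re (H $ i $ j) = axis i 1 \<bullet> ((H::('n::finite) cmat) *v axis j 1)"
  by (simp add: inner_axis_left mv_axis inner_complex_def)

lemma entry_im: "Im (H $ i $ j) = axis i \<i> \<bullet> ((H::('n::finite) cmat) *v axis j 1)"
  by (simp add: inner_axis_left mv_axis inner_complex_def)

lemma herm_seq_conv:
  fixes H :: "nat \<Rightarrow> ('n::finite) cmat"
  assumes h: "\<forall>k. herm (H k)" and c: "\<forall>x. convergent (\<lambda>k. x \<bullet> (H k *v x))"
  shows "convergent H"
proof -
  have cab: "\<And>a b. convergent (\<lambda>k. a \<bullet> (H k *v b))"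
  proof -
    fix a b :: "complex^'n"
    have e: "(\<lambda>k. a \<bullet> (H k *v b)) = (\<lambda>k. ((a + b) \<bullet> (H k *v (a + b)) - (a - b) \<bullet> (H k *v (a - b))) / 4)"
      using polar h by blast
    have "(\<lambda>k. ((a + b) \<bullet> (H k *v (a + b)) - (a - b) \<bullet> (H k *v (a - b))) / 4) \<longlonglongrightarrow>
       (lim (\<lambda>k. (a + b) \<bullet> (H k *v (a + b))) - lim (\<lambda>k. (a - b) \<bullet> (H k *v (a - b)))) / 4"
      using c[rule_format, of "a + b"] c[rule_format, of "a - b"]
      by (intro tendsto_divide tendsto_diff tendsto_const) (simp_all add: convergent_LIMSEQ_iff)
    thus "convergent (\<lambda>k. a \<bullet> (H k *v b))" unfolding e convergent_def by blast
  qed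
  define L where "L = (\<chi> i j. Complex (lim (\<lambda>k. axis i 1 \<bullet> (H k *v axis j 1))) (lim (\<lambda>k. axis i \<i> \<bullet> (H k *v axis j 1))))"
  have "H \<longlonglongrightarrow> L"
  proof (rule vec_tendstoI, rule vec_tendstoI)
    fix i j
    have e: "(\<lambda>k. H k $ i $ j) = (\<lambda>k. Complex (axis i 1 \<bullet> (H k *v axis j 1)) (axis i \<i> \<bullet> (H k *v axis j 1)))"
      by (simp add: entry_re[symmetric] entry_im[symmetric])
    show "(\<lambda>k. H k $ i $ j) \<longlonglongrightarrow> L $ i $ j"
      unfolding e L_def using cab[of "axis i 1" "axis j 1"] cab[of "axis i \<i>" "axis j 1"]
      by (simp, intro tendsto_Complex) (simp_all add: convergent_LIMSEQ_iff)
  qed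
  thus ?thesis unfolding convergent_def by blast
qed



primrec Yseq :: "('n::finite) cmat \<Rightarrow> nat \<Rightarrow> 'n cmat" where
  "Yseq B 0 = 0"
| "Yseq B (Suc k) = (1/2) *\<^sub>R (B + Yseq B k ** Yseq B k)"

lemma Y_cone: "\<exists>s. 0 \<le> s \<and> s \<le> 1 \<and> Yseq B k \<in> mcone B s"
proof (induct k)
  case 0 show ?case using cone_zero[of B] by (intro exI[of _ 0]) simp
next
  case (Suc k)
  then obtain s where s: "0 \<le> s" "s \<le> 1" "Yseq B k \<in> mcone B s" by blast
  have "Yseq B (Suc k) \<in> mcone B ((1/2) * (1 + s * s))"
    unfolding Yseq.simps by (intro cone_scale cone_add cone_B cone_mult s(3)) simp
  moreover have "s * s \<le> 1" using s by (simp add: mult_le_one)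
  ultimately show ?case using s by (intro exI[of _ "(1/2) * (1 + s * s)"]) auto
qed

lemma Y_diff: "\<exists>s. Yseq B (Suc k) - Yseq B k \<in> mcone B s"
proof (induct k)
  case 0
  have "Yseq B (Suc 0) - Yseq B 0 = (1/2) *\<^sub>R B" by simp
  thus ?case using cone_scale[OF cone_B, of "1/2" B] by auto
next
  case (Suc k)
  then obtain d where d: "Yseq B (Suc k) - Yseq B k \<in> mcone B d" by blast
  obtain s1 where s1: "Yseq B (Suc k) \<in> mcone B s1" using Y_cone by blast
  obtain s0 where s0: "Yseq B k \<in> mcone B s0" using Y_cone by blast
  define Y1 where "Y1 = Yseq B (Suc k)"
  define Y0 where "Y0 = Yseq B k"
  have c: "Y1 ** Y0 = Y0 ** Y1" unfolding Y1_def Y0_def by (rule cone_comm[OF s1 s0])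
  have e2: "Yseq B (Suc (Suc k)) = (1/2) *\<^sub>R (B + Y1 ** Y1)" unfolding Y1_def by simp
  have e1: "Yseq B (Suc k) = (1/2) *\<^sub>R (B + Y0 ** Y0)" unfolding Y0_def by simp
  have "Yseq B (Suc (Suc k)) - Yseq B (Suc k) = (1/2) *\<^sub>R (Y1 ** Y1 - Y0 ** Y0)"
    unfolding e2 e1 by (simp add: algebra_simps)
  also have "Y1 ** Y1 - Y0 ** Y0 = (Y1 - Y0) ** (Y1 + Y0)"
    by (simp add: mdiff_rdistrib madd_ldistrib c)
  finally have e: "Yseq B (Suc (Suc k)) - Yseq B (Suc k) = (1/2) *\<^sub>R ((Y1 - Y0) ** (Y1 + Y0))" .
  have "(1/2) *\<^sub>R ((Y1 - Y0) ** (Y1 + Y0)) \<in> mcone B ((1/2) * (d * (s1 + s0)))"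
    using d s1 s0 unfolding Y1_def[symmetric] Y0_def[symmetric] by (intro cone_scale cone_mult cone_add) simp_all
  thus ?case unfolding e by blast
qed

lemma sqrt_exists_contr:
  fixes B :: "('n::finite) cmat"
  assumes pB: "psd B" and cB: "\<forall>x. norm (B *v x) \<le> norm x"
  shows "\<exists>S. psd S \<and> S ** S = mat 1 - B"
proof -
  have hY: "\<And>k. herm (Yseq B k)" using Y_cone cone_props(1)[OF pB cB] by blast
  have ub: "\<And>k x. x \<bullet> (Yseq B k *v x) \<le> x \<bullet> x"
  proof -
    fix k x
    obtain s where s: "0 \<le> s" "s \<le> 1" "Yseq B k \<in> mcone B s" using Y_cone by blast
    have "x \<bullet> (Yseq B k *v x) \<le> s * (x \<bullet> x)" by (rule cone_props(3)[OF pB cB s(3)])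
    also have "\<dots> \<le> x \<bullet> x" using s by (simp add: mult_left_le_one_le)
    finally show "x \<bullet> (Yseq B k *v x) \<le> x \<bullet> x" .
  qed
  have mono: "\<And>k x. x \<bullet> (Yseq B k *v x) \<le> x \<bullet> (Yseq B (Suc k) *v x)"
  proof -
    fix k x
    obtain d where d: "Yseq B (Suc k) - Yseq B k \<in> mcone B d" using Y_diff by blast
    have "0 \<le> x \<bullet> ((Yseq B (Suc k) - Yseq B k) *v x)" by (rule cone_props(2)[OF pB cB d])
    thus "x \<bullet> (Yseq B k *v x) \<le> x \<bullet> (Yseq B (Suc k) *v x)"
      by (simp add: matrix_vector_mult_diff_rdistrib inner_diff_right)
  qed
  have "\<forall>x. convergent (\<lambda>k. x \<bullet> (Yseq B k *v x))"
  proof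
    fix x :: "complex^'n"
    have "incseq (\<lambda>k. x \<bullet> (Yseq B k *v x))" by (rule incseq_SucI) (rule mono)
    moreover have "\<forall>i. x \<bullet> (Yseq B i *v x) \<le> x \<bullet> x" using ub by blast
    ultimately obtain l where "(\<lambda>k. x \<bullet> (Yseq B k *v x)) \<longlonglongrightarrow> l"
      using incseq_convergent by blast
    thus "convergent (\<lambda>k. x \<bullet> (Yseq B k *v x))" unfolding convergent_def by blast
  qed
  hence "convergent (Yseq B)" using hY herm_seq_conv by blast
  then obtain L where YL: "Yseq B \<longlonglongrightarrow> L" unfolding convergent_def by blast
  have "(\<lambda>k. Yseq B (Suc k)) \<longlonglongrightarrow> L" by (rule LIMSEQ_Suc[OF YL])
  moreover have "(\<lambda>k. Yseq B (Suc k)) \<longlonglongrightarrow> (1/2) *\<^sub>R (B + L ** L)"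
    unfolding Yseq.simps by (intro tendsto_scaleR tendsto_const tendsto_add tendsto_mm YL)
  ultimately have fix_eq: "L = (1/2) *\<^sub>R (B + L ** L)" by (rule LIMSEQ_unique)
  have "(\<lambda>k. adjoint_c (Yseq B k)) \<longlonglongrightarrow> adjoint_c L" by (rule tendsto_adj[OF YL])
  moreover have "(\<lambda>k. adjoint_c (Yseq B k)) = Yseq B" using hY unfolding herm_def by simp
  ultimately have hL: "herm L" unfolding herm_def using YL LIMSEQ_unique by metis
  have Lle: "\<And>x. x \<bullet> (L *v x) \<le> x \<bullet> x"
  proof -
    fix x
    show "x \<bullet> (L *v x) \<le> x \<bullet> x"
      by (rule tendsto_upperbound[OF tendsto_quad[OF YL]]) (simp_all add: ub)
  qed
  define S where "S = mat 1 - L"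
  have hS: "herm S" using hL unfolding S_def herm_def by (simp add: adj_diff adj_one)
  have "\<forall>x. 0 \<le> x \<bullet> (S *v x)" unfolding S_def
    using Lle by (simp add: matrix_vector_mult_diff_rdistrib inner_diff_right)
  hence pS: "psd S" using hS psd_iff by blast
  have LL: "L ** L = 2 *\<^sub>R L - B"
  proof -
    have "2 *\<^sub>R L = B + L ** L" by (subst fix_eq) simp
    thus ?thesis by (simp add: algebra_simps)
  qed
  have "S ** S = mat 1 - L - (L - L ** L)"
    unfolding S_def by (simp add: mdiff_ldistrib mdiff_rdistrib)
  also have "\<dots> = mat 1 - B" unfolding LL by (simp add: algebra_simps scaleR_2)
  finally show ?thesis using pS by blast
qed

lemma quad_disc:
  fixes a b c :: real
  assumes q: "\<forall>t. 0 \<le> c + 2 * b * t + a * t^2" and a: "0 \<le> a"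
  shows "b^2 \<le> a * c"
proof (cases "a = 0")
  case True
  have "b = 0"
  proof (rule ccontr)
    assume b: "b \<noteq> 0"
    have q0: "\<forall>t. 0 \<le> c + 2 * b * t" using q True by simp
    have "0 \<le> c + 2 * b * (- (\<bar>c\<bar> + 1) / (2 * b))" using q0 by blast
    also have "\<dots> = c - \<bar>c\<bar> - 1" using b by (simp add: field_simps)
    finally show False by linarith
  qed
  thus ?thesis using True by simp
next
  case False
  hence ap: "a > 0" using a by simp
  have "0 \<le> c + 2 * b * (- b / a) + a * (- b / a)^2" using q by blast
  also have "\<dots> = c - b^2 / a" using ap by (simp add: field_simps power2_eq_square)
  finally have "b^2 / a \<le> c" by simp
  thus ?thesis using ap by (simp add: field_simps mult.commute)
qed

lemma psd_cs:
  assumes p: "psd A"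
  shows "(y \<bullet> (A *v x))^2 \<le> (y \<bullet> (A *v y)) * (x \<bullet> (A *v x))"
proof -
  have h: "herm A" and pos: "\<And>z. 0 \<le> z \<bullet> (A *v z)" using p psd_iff by auto
  have "\<forall>t. 0 \<le> x \<bullet> (A *v x) + 2 * (y \<bullet> (A *v x)) * t + (y \<bullet> (A *v y)) * t^2"
  proof
    fix t
    have "0 \<le> (x + t *\<^sub>R y) \<bullet> (A *v (x + t *\<^sub>R y))" by (rule pos)
    thus "0 \<le> x \<bullet> (A *v x) + 2 * (y \<bullet> (A *v x)) * t + (y \<bullet> (A *v y)) * t^2"
      unfolding quad_expand[OF h] by (simp add: algebra_simps)
  qed
  from quad_disc[OF this pos] show ?thesis .
qed

lemma psd_scaling:
  fixes A :: "('n::finite) cmat"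
  assumes p: "psd A"
  shows "\<exists>c>0. psd (mat 1 - c *\<^sub>R A) \<and> (\<forall>x. norm ((mat 1 - c *\<^sub>R A) *v x) \<le> norm x)"
proof -
  have h: "herm A" and pos: "\<And>z. 0 \<le> z \<bullet> (A *v z)" using p psd_iff by auto
  obtain K where K: "K > 0" "\<And>x. norm (A *v x) \<le> K * norm x"
    using linear_bounded_pos[OF matrix_vector_mul_linear] by blast
  have key: "\<And>x. (A *v x) \<bullet> (A *v x) \<le> K * (x \<bullet> (A *v x))"
  proof -
    fix x
    define y where "y = A *v x"
    have "(y \<bullet> y)^2 \<le> (y \<bullet> (A *v y)) * (x \<bullet> (A *v x))" using psd_cs[OF p, of y x] by (simp add: y_def)
    also have "y \<bullet> (A *v y) \<le> K * (y \<bullet> y)"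
    proof -
      have "y \<bullet> (A *v y) \<le> norm y * norm (A *v y)" by (rule norm_cauchy_schwarz)
      also have "\<dots> \<le> norm y * (K * norm y)" using K(2) by (simp add: mult_left_mono)
      also have "\<dots> = K * (norm y * norm y)" by (simp add: mult_ac)
      also have "norm y * norm y = y \<bullet> y" by (simp add: power2_norm_eq_inner[symmetric] power2_eq_square)
      finally show ?thesis .
    qed
    hence "(y \<bullet> (A *v y)) * (x \<bullet> (A *v x)) \<le> K * (y \<bullet> y) * (x \<bullet> (A *v x))"
      using pos by (simp add: mult_right_mono)
    finally have "(y \<bullet> y) * (y \<bullet> y) \<le> (y \<bullet> y) * (K * (x \<bullet> (A *v x)))" by (simp add: power2_eq_square mult_ac)
    moreover have "0 \<le> y \<bullet> y" by simp
    ultimately show "(A *v x) \<bullet> (A *v x) \<le> K * (x \<bullet> (A *v x))"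
    proof (cases "y \<bullet> y = 0")
      case True
      have "0 \<le> K * (x \<bullet> (A *v x))" using pos[of x] K(1) by simp
      thus ?thesis using True unfolding y_def by simp
    next
      case False
      hence "0 < y \<bullet> y" using \<open>0 \<le> y \<bullet> y\<close> by linarith
      thus ?thesis using \<open>(y \<bullet> y) * (y \<bullet> y) \<le> (y \<bullet> y) * (K * (x \<bullet> (A *v x)))\<close>
        unfolding y_def by (simp add: mult_le_cancel_left_pos)
    qed
  qed
  define c where "c = 1 / K"
  have c: "c > 0" "c * K = 1" using K unfolding c_def by auto
  define Bm where "Bm = mat 1 - c *\<^sub>R A"
  have Bx: "\<And>x. Bm *v x = x - c *\<^sub>R (A *v x)"
    unfolding Bm_def by (simp add: matrix_vector_mult_diff_rdistrib mvscale)
  have hB: "herm Bm" using h unfolding Bm_def herm_def by (simp add: adj_diff adj_one adj_scale)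
  have "\<forall>x. 0 \<le> x \<bullet> (Bm *v x)"
  proof
    fix x :: "complex^'n"
    have xx: "x \<bullet> x = norm x * norm x" by (metis power2_norm_eq_inner power2_eq_square)
    have "x \<bullet> (A *v x) \<le> norm x * norm (A *v x)" by (rule norm_cauchy_schwarz)
    also have "\<dots> \<le> norm x * (K * norm x)" by (rule mult_left_mono[OF K(2) norm_ge_zero])
    also have "\<dots> = K * (x \<bullet> x)" unfolding xx by (simp only: mult.commute mult.left_commute)
    finally have "c * (x \<bullet> (A *v x)) \<le> c * (K * (x \<bullet> x))" using c(1) by (simp add: mult_left_mono)
    also have "c * (K * (x \<bullet> x)) = x \<bullet> x" using c(2) by (simp only: mult.assoc[symmetric] mult_1)
    finally have "c * (x \<bullet> (A *v x)) \<le> x \<bullet> x" .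
    thus "0 \<le> x \<bullet> (Bm *v x)" unfolding Bx by (simp add: inner_diff_right)
  qed
  hence pB: "psd Bm" using hB psd_iff by blast
  have "\<forall>x. norm (Bm *v x) \<le> norm x"
  proof
    fix x
    have "(norm (Bm *v x))^2 = x \<bullet> x - 2 * c * (x \<bullet> (A *v x)) + c^2 * ((A *v x) \<bullet> (A *v x))"
      unfolding Bx power2_norm_eq_inner
      by (simp add: inner_diff_left inner_diff_right inner_commute[of "A *v x" x] power2_eq_square algebra_simps)
    also have "c^2 * ((A *v x) \<bullet> (A *v x)) \<le> c^2 * (K * (x \<bullet> (A *v x)))"
      by (rule mult_left_mono[OF key]) simp
    also have "c^2 * (K * (x \<bullet> (A *v x))) = c * (x \<bullet> (A *v x))"
    proof -
      have "c^2 * (K * (x \<bullet> (A *v x))) = c * ((c * K) * (x \<bullet> (A *v x)))" by (simp only: power2_eq_square mult.assoc)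
      thus ?thesis using c(2) by simp
    qed
    finally have "(norm (Bm *v x))^2 \<le> x \<bullet> x - c * (x \<bullet> (A *v x))" by simp
    also have "\<dots> \<le> (norm x)^2" using pos[of x] c(1) by (simp add: power2_norm_eq_inner)
    finally show "norm (Bm *v x) \<le> norm x" by (rule power2_le_imp_le) simp
  qed
  thus ?thesis using pB c(1) unfolding Bm_def by blast
qed

lemma sqrt_exists:
  fixes A :: "('n::finite) cmat"
  assumes p: "psd A"
  shows "\<exists>S. psd S \<and> S ** S = A"
proof -
  obtain c where c: "c > 0" "psd (mat 1 - c *\<^sub>R A)" "\<forall>x. norm ((mat 1 - c *\<^sub>R A) *v x) \<le> norm x"
    using psd_scaling[OF p] by blast
  obtain S0 where S0: "psd S0" "S0 ** S0 = mat 1 - (mat 1 - c *\<^sub>R A)"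
    using sqrt_exists_contr[OF c(2) c(3)] by blast
  define S where "S = (1 / sqrt c) *\<^sub>R S0"
  have "S ** S = (1 / c) *\<^sub>R (S0 ** S0)"
    unfolding S_def using c(1) by (simp add: mscale_left mscale_right real_sqrt_mult[symmetric])
  also have "\<dots> = A" using S0(2) c(1) by simp
  finally have sq: "S ** S = A" .
  have h0: "herm S0" and pos0: "\<forall>x. 0 \<le> x \<bullet> (S0 *v x)" using S0(1) psd_iff by auto
  have "herm S" using h0 unfolding S_def herm_def by (simp add: adj_scale)
  moreover have "\<forall>x. 0 \<le> x \<bullet> (S *v x)" unfolding S_def using pos0 c(1) by (simp add: mvscale)
  ultimately have "psd S" using psd_iff by blast
  thus ?thesis using sq by blast
qed

lemma psd_sqrt_props:
  fixes A :: "('n::finite) cmat"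
  assumes p: "psd A"
  shows "psd (psd_sqrt A)" "psd_sqrt A ** psd_sqrt A = A"
proof -
  obtain S where S: "psd S" "S ** S = A" using sqrt_exists[OF p] by blast
  have ex1: "\<exists>!B. psd B \<and> B ** B = A"
  proof (rule ex1I[of _ S])
    show "psd S \<and> S ** S = A" using S by simp
    fix B assume "psd B \<and> B ** B = A"
    thus "B = S" using sqrt_unique[of B S] S by simp
  qed
  have "psd (psd_sqrt A) \<and> psd_sqrt A ** psd_sqrt A = A"
    unfolding psd_sqrt_def by (rule theI'[OF ex1])
  thus "psd (psd_sqrt A)" "psd_sqrt A ** psd_sqrt A = A" by auto
qed



lemma psd_limit:
  fixes X :: "nat \<Rightarrow> ('n::finite) cmat"
  assumes "\<forall>n. psd (X n)" "X \<longlonglongrightarrow> L"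
  shows "psd L"
proof -
  have h: "\<And>n. herm (X n)" and pos: "\<And>n x. 0 \<le> x \<bullet> (X n *v x)" using assms(1) psd_iff by auto
  have "(\<lambda>n. adjoint_c (X n)) \<longlonglongrightarrow> adjoint_c L" by (rule tendsto_adj[OF assms(2)])
  moreover have "(\<lambda>n. adjoint_c (X n)) = X" using h unfolding herm_def by simp
  ultimately have "adjoint_c L = L" using assms(2) LIMSEQ_unique by metis
  moreover have "\<forall>x. 0 \<le> x \<bullet> (L *v x)"
  proof
    fix x
    show "0 \<le> x \<bullet> (L *v x)"
      by (rule tendsto_lowerbound[OF tendsto_quad[OF assms(2)]]) (simp_all add: pos)
  qed
  ultimately show ?thesis unfolding psd_iff herm_def by blast
qed

lemma trace_scale: "trace (r *\<^sub>R (X::('n::finite) cmat)) = complex_of_real r * trace X"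
  unfolding trace_def by (simp add: cscale sum_distrib_left)

lemma gram_props:
  fixes T :: "('n::finite) cmat"
  assumes "T \<noteq> 0"
  shows "psd (T ** adjoint_c T)" "\<exists>t>0. trace (T ** adjoint_c T) = complex_of_real t"
proof -
  have "herm (T ** adjoint_c T)" unfolding herm_def by (simp add: adj_mult)
  moreover have "\<forall>x. 0 \<le> x \<bullet> ((T ** adjoint_c T) *v x)"
  proof
    fix x :: "complex^'n"
    have "x \<bullet> ((T ** adjoint_c T) *v x) = Re (cinner x (T *v (adjoint_c T *v x)))"
      by (simp add: cinner_Re matrix_vector_mul_assoc)
    also have "\<dots> = (adjoint_c T *v x) \<bullet> (adjoint_c T *v x)" by (subst cinner_adj) (simp only: cinner_Re adj_adj)
    finally show "0 \<le> x \<bullet> ((T ** adjoint_c T) *v x)" by simp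
  qed
  ultimately show "psd (T ** adjoint_c T)" using psd_iff by blast
  define t where "t = (\<Sum>i\<in>UNIV. \<Sum>k\<in>UNIV. (cmod (T$i$k))^2)"
  have "trace (T ** adjoint_c T) = (\<Sum>i\<in>UNIV. \<Sum>k\<in>UNIV. T$i$k * cnj (T$i$k))"
    unfolding trace_def by (simp add: mmult_nth)
  also have "\<dots> = complex_of_real t" unfolding t_def by (simp only: of_real_sum complex_norm_square)
  finally have tr: "trace (T ** adjoint_c T) = complex_of_real t" .
  obtain i k where ik: "T$i$k \<noteq> 0" using assms by (metis vec_eq_iff zero_index)
  have "0 < (\<Sum>k\<in>UNIV. (cmod (T$i$k))^2)"
    by (rule sum_pos2[of UNIV k]) (use ik in auto)
  hence "0 < t" unfolding t_def
    by (intro sum_pos2[of UNIV i, where f="\<lambda>i. \<Sum>k\<in>UNIV. (cmod (T$i$k))^2"]) (auto intro: sum_nonneg)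
  thus "\<exists>t>0. trace (T ** adjoint_c T) = complex_of_real t" using tr by blast
qed

lemma normP_gram:
  fixes T :: "('n::finite) cmat"
  assumes "T \<noteq> 0"
  shows "psd (normP (T ** adjoint_c T))" "trace (normP (T ** adjoint_c T)) = 1"
proof -
  obtain t where t: "t > 0" "trace (T ** adjoint_c T) = complex_of_real t" using gram_props(2)[OF assms] by blast
  have p: "psd (T ** adjoint_c T)" by (rule gram_props(1)[OF assms])
  have n: "normP (T ** adjoint_c T) = (1 / t) *\<^sub>R (T ** adjoint_c T)" unfolding normP_def t(2) by simp
  show "trace (normP (T ** adjoint_c T)) = 1" unfolding n trace_scale t(2) using t(1)
    by (simp add: of_real_mult[symmetric] del: of_real_mult)
  have "herm (normP (T ** adjoint_c T))" using p[unfolded psd_iff herm_def] unfolding n herm_def by (simp add: adj_scale)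
  moreover have "\<forall>x. 0 \<le> x \<bullet> (normP (T ** adjoint_c T) *v x)"
    unfolding n using p[unfolded psd_iff] t(1) by (simp add: mvscale)
  ultimately show "psd (normP (T ** adjoint_c T))" using psd_iff by blast
qed

lemma satake_props:
  assumes SL: "\<forall>g\<in>carrier G. det (\<tau> g) = 1" and q: "q \<in> satake G \<tau>"
  shows "psd q" "trace q = 1"
proof -
  obtain X where X: "\<forall>n. X n \<in> {normP (\<tau> g ** adjoint_c (\<tau> g)) | g. g \<in> carrier G}" "X \<longlonglongrightarrow> q"
    using q unfolding satake_def closure_sequential by blast
  have "\<forall>n. psd (X n) \<and> trace (X n) = 1"
  proof
    fix n
    obtain g where g: "g \<in> carrier G" "X n = normP (\<tau> g ** adjoint_c (\<tau> g))" using X(1) by blast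
    have "\<tau> g \<noteq> 0" using SL g(1) by (metis det_0 mat_0 zero_neq_one)
    thus "psd (X n) \<and> trace (X n) = 1" using normP_gram[OF \<open>\<tau> g \<noteq> 0\<close>] g(2) by simp
  qed
  hence "\<forall>n. psd (X n)" "\<forall>n. trace (X n) = 1" by auto
  show "psd q" by (rule psd_limit) fact+
  have "(\<lambda>n. trace (X n)) \<longlonglongrightarrow> trace q" by (rule tendsto_trace[OF X(2)])
  moreover have "(\<lambda>n. trace (X n)) \<longlonglongrightarrow> 1" using \<open>\<forall>n. trace (X n) = 1\<close> by simp
  ultimately show "trace q = 1" by (rule LIMSEQ_unique)
qed



lemma norm_mv_le: "norm ((A::('n::finite) cmat) *v axis j 1) \<le> of_nat CARD('n) * norm A"
proof -
  have "norm (A *v axis j 1) \<le> (\<Sum>i\<in>UNIV. norm ((A *v axis j 1) $ i))"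
    unfolding norm_vec_def by (rule L2_set_le_sum) simp
  also have "\<dots> \<le> (\<Sum>i\<in>(UNIV::'n set). norm A)"
  proof (rule sum_mono)
    fix i
    have "norm ((A *v axis j 1) $ i) = norm (A $ i $ j)" by (simp add: mv_axis)
    also have "\<dots> \<le> norm (A $ i)" by (rule Finite_Cartesian_Product.norm_nth_le)
    also have "\<dots> \<le> norm A" by (rule Finite_Cartesian_Product.norm_nth_le)
    finally show "norm ((A *v axis j 1) $ i) \<le> norm A" .
  qed
  finally show ?thesis by simp
qed

lemma sqrt_bound:
  fixes A :: "('n::finite) cmat"
  assumes p: "psd A"
  shows "norm (psd_sqrt A) \<le> of_nat CARD('n) * of_nat CARD('n) * sqrt (of_nat CARD('n) * norm A)"
proof -
  define S where "S = psd_sqrt A"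
  have pS: "psd S" and sq: "S ** S = A" using psd_sqrt_props[OF p] unfolding S_def by auto
  have hS: "herm S" using pS psd_iff by auto
  define C where "C = of_nat CARD('n) * norm A"
  have col: "\<And>j. norm (S *v axis j 1) \<le> sqrt C"
  proof -
    fix j :: 'n
    have "(norm (S *v axis j 1))^2 = (S *v axis j 1) \<bullet> (S *v axis j 1)" by (rule power2_norm_eq_inner)
    also have "\<dots> = axis j 1 \<bullet> (S *v (S *v axis j 1))" by (rule herm_inner[OF hS, symmetric])
    also have "\<dots> = axis j 1 \<bullet> (A *v axis j 1)" by (simp add: matrix_vector_mul_assoc sq)
    also have "\<dots> \<le> norm (axis j (1::complex)) * norm (A *v axis j 1)" by (rule norm_cauchy_schwarz)
    also have "\<dots> \<le> C" unfolding C_def using norm_mv_le[of A j] by (simp add: norm_axis_1)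
    finally show "norm (S *v axis j 1) \<le> sqrt C" by (simp add: real_le_rsqrt)
  qed
  have "norm S \<le> (\<Sum>i\<in>UNIV. norm (S $ i))"
    unfolding norm_vec_def by (rule L2_set_le_sum) simp
  also have "\<dots> \<le> (\<Sum>i\<in>(UNIV::'n set). \<Sum>j\<in>(UNIV::'n set). sqrt C)"
  proof (rule sum_mono)
    fix i
    have "norm (S $ i) \<le> (\<Sum>j\<in>UNIV. norm (S $ i $ j))"
      unfolding norm_vec_def by (rule L2_set_le_sum) simp
    also have "\<dots> \<le> (\<Sum>j\<in>(UNIV::'n set). sqrt C)"
    proof (rule sum_mono)
      fix j
      have "norm (S $ i $ j) = norm ((S *v axis j 1) $ i)" by (simp add: mv_axis)
      also have "\<dots> \<le> norm (S *v axis j 1)" by (rule Finite_Cartesian_Product.norm_nth_le)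
      also have "\<dots> \<le> sqrt C" by (rule col)
      finally show "norm (S $ i $ j) \<le> sqrt C" .
    qed
    finally show "norm (S $ i) \<le> (\<Sum>j\<in>(UNIV::'n set). sqrt C)" .
  qed
  finally show ?thesis unfolding S_def C_def by simp
qed

lemma sqrt_cont:
  fixes p :: "nat \<Rightarrow> ('n::finite) cmat"
  assumes pp: "\<forall>n. psd (p n)" and pq: "psd q" and conv: "p \<longlonglongrightarrow> q"
  shows "(\<lambda>n. psd_sqrt (p n)) \<longlonglongrightarrow> psd_sqrt q"
proof (rule ccontr)
  define S where "S n = psd_sqrt (p n)" for n
  define Sq where "Sq = psd_sqrt q"
  have pSq: "psd Sq" "Sq ** Sq = q" using psd_sqrt_props[OF pq] unfolding Sq_def by auto
  have pS: "\<And>n. psd (S n)" "\<And>n. S n ** S n = p n" using psd_sqrt_props pp unfolding S_def by auto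
  obtain Bd where Bd: "\<forall>n. norm (p n) \<le> Bd"
    using convergent_imp_bounded[OF conv] unfolding bounded_iff by auto
  have bS: "bounded (range S)" unfolding bounded_iff
  proof (intro exI ballI)
    fix y assume "y \<in> range S"
    then obtain n where y: "y = S n" by blast
    have "norm (S n) \<le> of_nat CARD('n) * of_nat CARD('n) * sqrt (of_nat CARD('n) * norm (p n))"
      unfolding S_def by (rule sqrt_bound[OF pp[rule_format]])
    also have "\<dots> \<le> of_nat CARD('n) * of_nat CARD('n) * sqrt (of_nat CARD('n) * Bd)"
      using Bd by (intro mult_left_mono real_sqrt_le_mono) auto
    finally show "norm y \<le> of_nat CARD('n) * of_nat CARD('n) * sqrt (of_nat CARD('n) * Bd)" using y by simp
  qed
  assume "\<not> (\<lambda>n. psd_sqrt (p n)) \<longlonglongrightarrow> psd_sqrt q"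
  hence "\<not> S \<longlonglongrightarrow> Sq" unfolding S_def[abs_def] Sq_def by simp
  then obtain e where e: "e > 0" "\<not> eventually (\<lambda>n. dist (S n) Sq < e) sequentially"
    unfolding tendsto_iff by blast
  have "infinite {n. e \<le> dist (S n) Sq}"
    unfolding infinite_nat_iff_unbounded_le
  proof
    fix m
    show "\<exists>n\<ge>m. n \<in> {n. e \<le> dist (S n) Sq}"
    proof (rule ccontr)
      assume "\<not> (\<exists>n\<ge>m. n \<in> {n. e \<le> dist (S n) Sq})"
      hence "\<forall>n\<ge>m. dist (S n) Sq < e" by auto
      hence "eventually (\<lambda>n. dist (S n) Sq < e) sequentially" unfolding eventually_sequentially by blast
      thus False using e(2) by blast
    qed
  qed
  then obtain r :: "nat \<Rightarrow> nat" where r: "strict_mono r" "\<forall>n. r n \<in> {n. e \<le> dist (S n) Sq}"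
    using infinite_enumerate[of "{n. e \<le> dist (S n) Sq}"] by blast
  have "range (S \<circ> r) \<subseteq> range S" by auto
  hence "bounded (range (S \<circ> r))" using bS bounded_subset by blast
  then obtain l s where s: "strict_mono s" "((S \<circ> r) \<circ> s) \<longlonglongrightarrow> l"
    using bounded_imp_convergent_subsequence by blast
  have pl: "psd l" by (rule psd_limit[OF _ s(2)]) (simp add: pS)
  have t1: "(\<lambda>n. ((S \<circ> r) \<circ> s) n ** ((S \<circ> r) \<circ> s) n) \<longlonglongrightarrow> l ** l" by (intro tendsto_mm s(2))
  have e1: "(\<lambda>n. ((S \<circ> r) \<circ> s) n ** ((S \<circ> r) \<circ> s) n) = p \<circ> (r \<circ> s)" by (simp add: pS o_def)
  have t2: "(p \<circ> (r \<circ> s)) \<longlonglongrightarrow> q" by (rule LIMSEQ_subseq_LIMSEQ[OF conv strict_mono_o[OF r(1) s(1)]])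
  have "l ** l = q" using t1 unfolding e1 using t2 by (rule LIMSEQ_unique)
  hence "l = Sq" using sqrt_unique[OF pl pSq(1)] pSq(2) by simp
  hence "((S \<circ> r) \<circ> s) \<longlonglongrightarrow> Sq" using s(2) by simp
  hence t: "(\<lambda>n. dist (((S \<circ> r) \<circ> s) n) Sq) \<longlonglongrightarrow> 0" by (rule iffD1[OF tendsto_dist_iff])
  have "\<forall>n. e \<le> dist (((S \<circ> r) \<circ> s) n) Sq" using r(2) by simp
  hence ev: "eventually (\<lambda>n. e \<le> dist (((S \<circ> r) \<circ> s) n) Sq) sequentially" by (rule always_eventually)
  have "e \<le> 0" by (rule tendsto_lowerbound[OF t ev]) simp
  thus False using e(1) by simp
qed



lemma ns_norm: "(\<Sum>i\<in>UNIV. (cmod (v$i))^2) = (norm (v::complex^('n::finite)))^2"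
  unfolding norm_vec_def L2_set_def by (simp add: sum_nonneg)

lemma lineP_alt: "lineP v = (1 / (norm v)^2) *\<^sub>R (\<chi> i j. v$i * cnj (v$j))"
  unfolding lineP_def ns_norm ..

lemma lineP_scaleR:
  assumes "r \<noteq> 0" shows "lineP (r *\<^sub>R v) = lineP (v::complex^('n::finite))"
proof -
  have m: "(\<chi> i j. (r *\<^sub>R v)$i * cnj ((r *\<^sub>R v)$j)) = (r^2) *\<^sub>R (\<chi> i j. v$i * cnj (v$j))"
    unfolding vec_eq_iff by (simp add: cscale power2_eq_square mult_ac)
  have "lineP (r *\<^sub>R v) = (1 / (r^2 * (norm v)^2)) *\<^sub>R ((r^2) *\<^sub>R (\<chi> i j. v$i * cnj (v$j)))"
    unfolding lineP_alt m by (simp add: power_mult_distrib)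
  also have "\<dots> = (1 / (norm v)^2) *\<^sub>R (\<chi> i j. v$i * cnj (v$j))"
    using assms by simp
  finally show ?thesis unfolding lineP_alt .
qed

lemma cinner_scaleR: "cinner w (r *\<^sub>R v) = complex_of_real r * cinner w v"
  unfolding cinner_def by (simp add: cscale sum_distrib_left mult_ac)

lemma cont_cinner: "continuous_on UNIV (\<lambda>v. cinner (w::complex^('n::finite)) v)"
  unfolding cinner_def
  by (intro continuous_on_sum continuous_on_mult continuous_on_const continuous_on_component continuous_on_id)

lemma hyper_closed: "closed (hyperplaneP (w::complex^('n::finite)))"
proof -
  define K where "K = sphere (0::complex^'n) 1 \<inter> {v. cinner w v = 0}"
  have cK: "compact K" unfolding K_def
    by (intro compact_Int_closed compact_sphere closed_Collect_eq cont_cinner continuous_on_const)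
  have "continuous_on K (\<lambda>v. \<chi> i j. v$i * cnj (v$j))"
    by (intro continuous_on_vec_lambda continuous_on_mult continuous_on_cnj continuous_on_component continuous_on_id)
  moreover have "continuous_on K (\<lambda>v. \<chi> i j. v$i * cnj (v$j)) = continuous_on K lineP"
    by (rule continuous_on_cong[OF refl]) (simp add: K_def lineP_alt)
  ultimately have cl: "continuous_on K lineP" by simp
  have "hyperplaneP w = lineP ` K"
  proof
    show "lineP ` K \<subseteq> hyperplaneP w"
    proof
      fix x assume "x \<in> lineP ` K"
      then obtain v where v: "v \<in> K" "x = lineP v" by blast
      have "v \<noteq> 0" "cinner w v = 0" using v(1) unfolding K_def by auto
      thus "x \<in> hyperplaneP w" unfolding hyperplaneP_def using v(2) by blast
    qed
    show "hyperplaneP w \<subseteq> lineP ` K"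
    proof
      fix x assume "x \<in> hyperplaneP w"
      then obtain v where v: "x = lineP v" "v \<noteq> 0" "cinner w v = 0" unfolding hyperplaneP_def by blast
      define u where "u = (1 / norm v) *\<^sub>R v"
      have "u \<in> K" unfolding K_def u_def using v(2,3) by (simp add: cinner_scaleR)
      moreover have "lineP u = x" unfolding u_def v(1) using v(2) by (intro lineP_scaleR) simp
      ultimately show "x \<in> lineP ` K" by blast
    qed
  qed
  thus ?thesis using compact_imp_closed[OF compact_continuous_image[OF cl cK]] by simp
qed

lemma trace_SPS:
  fixes S :: "('n::finite) cmat"
  assumes h: "herm S"
  shows "trace (S ** lineP u ** S) = complex_of_real ((norm (S *v u))^2 / (norm u)^2)"
proof -
  define R where "R = (\<chi> i j. u$i * cnj (u$j))"
  have Sc: "\<And>i l. S$l$i = cnj (S$i$l)"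
  proof -
    fix i l
    have "adjoint_c S $ l $ i = S $ l $ i" using h unfolding herm_def by simp
    thus "S$l$i = cnj (S$i$l)" by simp
  qed
  have row: "\<And>i. ((S ** R) ** S) $ i $ i = (S *v u)$i * cnj ((S *v u)$i)"
  proof -
    fix i
    have "((S ** R) ** S) $ i $ i = (\<Sum>l\<in>UNIV. (\<Sum>k\<in>UNIV. S$i$k * (u$k * cnj (u$l))) * S$l$i)"
      unfolding R_def by (simp add: mmult_nth)
    also have "\<dots> = (\<Sum>l\<in>UNIV. (\<Sum>k\<in>UNIV. S$i$k * (u$k * cnj (u$l))) * cnj (S$i$l))"
    proof (rule sum.cong[OF refl])
      fix l
      show "(\<Sum>k\<in>UNIV. S$i$k * (u$k * cnj (u$l))) * S$l$i = (\<Sum>k\<in>UNIV. S$i$k * (u$k * cnj (u$l))) * cnj (S$i$l)"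
        by (subst Sc[of l i]) (rule refl)
    qed
    also have "\<dots> = (\<Sum>l\<in>UNIV. (\<Sum>k\<in>UNIV. S$i$k * u$k) * (cnj (S$i$l) * cnj (u$l)))"
    proof (rule sum.cong[OF refl])
      fix l
      have "(\<Sum>k\<in>UNIV. S$i$k * (u$k * cnj (u$l))) = (\<Sum>k\<in>UNIV. S$i$k * u$k) * cnj (u$l)"
        by (simp only: sum_distrib_right mult.assoc)
      thus "(\<Sum>k\<in>UNIV. S$i$k * (u$k * cnj (u$l))) * cnj (S$i$l) = (\<Sum>k\<in>UNIV. S$i$k * u$k) * (cnj (S$i$l) * cnj (u$l))"
        by (simp only: mult.assoc mult.commute[of "cnj (u$l)"])
    qed
    also have "\<dots> = (\<Sum>k\<in>UNIV. S$i$k * u$k) * cnj (\<Sum>l\<in>UNIV. S$i$l * u$l)"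
      by (simp only: sum_distrib_left cnj_sum complex_cnj_mult)
    also have "\<dots> = (S *v u)$i * cnj ((S *v u)$i)" by (simp add: mvec_nth)
    finally show "((S ** R) ** S) $ i $ i = (S *v u)$i * cnj ((S *v u)$i)" .
  qed
  have "trace (S ** R ** S) = (\<Sum>i\<in>UNIV. complex_of_real ((cmod ((S *v u)$i))^2))"
    unfolding trace_def row by (simp only: complex_norm_square)
  also have "\<dots> = complex_of_real ((norm (S *v u))^2)" by (simp only: of_real_sum[symmetric] ns_norm)
  finally have tr: "trace (S ** R ** S) = complex_of_real ((norm (S *v u))^2)" .
  have e: "S ** lineP u ** S = (1 / (norm u)^2) *\<^sub>R (S ** R ** S)"
    unfolding lineP_alt R_def[symmetric] by (simp add: mscale_left mscale_right)
  have "trace (S ** lineP u ** S) = complex_of_real (1 / (norm u)^2) * complex_of_real ((norm (S *v u))^2)"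
    unfolding e trace_scale tr ..
  also have "\<dots> = complex_of_real (1 / (norm u)^2 * (norm (S *v u))^2)" by (simp only: of_real_mult)
  also have "1 / (norm u)^2 * (norm (S *v u))^2 = (norm (S *v u))^2 / (norm u)^2" by simp
  finally show ?thesis .
qed



lemma cinner_axis: "cinner (axis j 1) (z::complex^('n::finite)) = z $ j"
proof -
  have "\<And>m. cnj (axis j 1 $ m) * z $ m = (if m = j then z $ j else 0)" by (simp add: axis_def)
  thus ?thesis unfolding cinner_def by simp
qed

theorem lemma3p5:
  fixes G :: "'g monoid" and \<tau> :: "'g \<Rightarrow> ('n::finite) cmat"
    and M :: "'n cmat set" and \<gamma> :: "'n cmat measure"
    and p :: "nat \<Rightarrow> 'n cmat" and q :: "'n cmat"
  assumes grp: "group G"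
    and hom: "\<forall>g\<in>carrier G. \<forall>h\<in>carrier G. \<tau> (g \<otimes>\<^bsub>G\<^esub> h) = \<tau> g ** \<tau> h"
    and SL: "\<forall>g\<in>carrier G. det (\<tau> g) = 1"
    and fin_ker: "finite {g \<in> carrier G. \<tau> g = mat 1}"
    and irr: "irreducible_rep G \<tau>"
    and M_orbit: "\<exists>v0. v0 \<noteq> 0 \<and> M = orbitP G \<tau> v0"
    and M_closed: "closed M"
    and M_unique: "\<forall>v. v \<noteq> 0 \<and> closed (orbitP G \<tau> v) \<longrightarrow> orbitP G \<tau> v = M"
    and prob: "prob_space \<gamma>"
    and borel: "sets \<gamma> = sets borel"
    and onM: "emeasure \<gamma> M = 1"
    and adm: "admissible \<gamma> M"
    and pn: "\<forall>n. p n \<in> satake G \<tau>"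
    and q: "q \<in> satake G \<tau>"
    and conv: "p \<longlonglongrightarrow> q"
  shows "AE x in \<gamma>. x \<in> M \<longrightarrow> hat_dom q x \<and> (\<lambda>n. hat (p n) x) \<longlonglongrightarrow> hat q x"
proof -
  obtain v0 where v0: "v0 \<noteq> 0" "M = orbitP G \<tau> v0" using M_orbit by blast
  have pq: "psd q" "trace q = 1" using satake_props[OF SL q] by auto
  have pp: "\<forall>n. psd (p n)" using satake_props(1)[OF SL] pn by blast
  define S where "S = psd_sqrt q"
  have pS: "psd S" "S ** S = q" using psd_sqrt_props[OF pq(1)] unfolding S_def by auto
  have hS: "herm S" using pS(1) psd_iff by auto
  have hq: "herm q" using pq(1) psd_iff by auto
  have Sn: "(\<lambda>n. psd_sqrt (p n)) \<longlonglongrightarrow> S" using sqrt_cont[OF pp pq(1) conv] unfolding S_def .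
  have "q \<noteq> 0" using pq(2) by (auto simp: trace_def)
  obtain j where j: "q *v axis j 1 \<noteq> 0"
  proof (rule ccontr)
    assume "\<not> thesis"
    hence "\<forall>j. q *v axis j 1 = 0" using that by blast
    hence "\<forall>i j. q $ i $ j = 0" by (metis mv_axis zero_index)
    hence "q = 0" by (simp add: vec_eq_iff)
    thus False using \<open>q \<noteq> 0\<close> by simp
  qed
  define w where "w = q *v axis j 1"
  define N where "N = hyperplaneP w \<inter> M"
  have "closed N" unfolding N_def using hyper_closed M_closed by (rule closed_Int)
  hence Ns: "N \<in> sets \<gamma>" unfolding borel by (rule borel_closed)
  have "emeasure \<gamma> N = 0" using adm j unfolding admissible_def N_def w_def by blast
  hence Nnull: "N \<in> null_sets \<gamma>" using Ns by (rule null_setsI)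
  show ?thesis
  proof (rule AE_I'[OF Nnull], rule subsetI)
    fix x assume "x \<in> {x \<in> space \<gamma>. \<not> (x \<in> M \<longrightarrow> hat_dom q x \<and> (\<lambda>n. hat (p n) x) \<longlonglongrightarrow> hat q x)}"
    hence xM: "x \<in> M" and nP: "\<not> (hat_dom q x \<and> (\<lambda>n. hat (p n) x) \<longlonglongrightarrow> hat q x)" by auto
    show "x \<in> N"
    proof (rule ccontr)
      assume xN: "x \<notin> N"
      obtain g where g: "g \<in> carrier G" "x = lineP (\<tau> g *v v0)" using xM v0(2) unfolding orbitP_def by blast
      define u where "u = \<tau> g *v v0"
      have "invertible (\<tau> g)" using SL g(1) invertible_det_nz by force
      then obtain B where B: "B ** \<tau> g = mat 1" unfolding invertible_def by blast
      have "B *v u = v0" unfolding u_def by (simp add: matrix_vector_mul_assoc B)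
      hence u0: "u \<noteq> 0" using v0(1) by auto
      have xu: "x = lineP u" using g(2) unfolding u_def .
      have "cinner w u \<noteq> 0"
      proof
        assume "cinner w u = 0"
        hence "x \<in> hyperplaneP w" unfolding hyperplaneP_def xu using u0 by blast
        thus False using xN xM unfolding N_def by blast
      qed
      moreover have "cinner w u = (q *v u) $ j"
      proof -
        have "cinner w u = cinner (adjoint_c q *v axis j 1) u" using hq unfolding herm_def w_def by simp
        also have "\<dots> = cinner (axis j 1) (q *v u)" by (rule cinner_adj[symmetric])
        also have "\<dots> = (q *v u) $ j" by (rule cinner_axis)
        finally show ?thesis .
      qed
      ultimately have "q *v u \<noteq> 0" by auto
      hence Su: "S *v u \<noteq> 0" using pS(2) by (metis matrix_vector_mul_assoc matrix_vector_mult_0_right)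
      have tr: "trace (S ** x ** S) = complex_of_real ((norm (S *v u))^2 / (norm u)^2)"
        unfolding xu by (rule trace_SPS[OF hS])
      have pos: "(norm (S *v u))^2 / (norm u)^2 > 0" using Su u0 by simp
      have hd: "hat_dom q x" unfolding hat_dom_def S_def[symmetric] tr using pos Su u0 by simp
      have "(\<lambda>n. psd_sqrt (p n) ** x ** psd_sqrt (p n)) \<longlonglongrightarrow> S ** x ** S"
        by (intro tendsto_mm tendsto_const Sn)
      moreover have "(\<lambda>n. Re (trace (psd_sqrt (p n) ** x ** psd_sqrt (p n)))) \<longlonglongrightarrow> Re (trace (S ** x ** S))"
        by (intro tendsto_Re tendsto_trace tendsto_mm tendsto_const Sn)
      moreover have "Re (trace (S ** x ** S)) \<noteq> 0" unfolding tr using pos Su u0 by simp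
      ultimately have "(\<lambda>n. (1 / Re (trace (psd_sqrt (p n) ** x ** psd_sqrt (p n)))) *\<^sub>R (psd_sqrt (p n) ** x ** psd_sqrt (p n)))
          \<longlonglongrightarrow> (1 / Re (trace (S ** x ** S))) *\<^sub>R (S ** x ** S)"
        by (intro tendsto_scaleR tendsto_divide tendsto_const)
      hence "(\<lambda>n. hat (p n) x) \<longlonglongrightarrow> hat q x" unfolding hat_def normP_def S_def .
      thus False using nP hd by blast
    qed
  qed
qed

end
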